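(* Let $G$ be a graph. Then $\chi_{alg}(G)=1$ if and only if $G$ is the empty graph (has no edges). Hence $\chi_{alg}(G)=1\iff\chi(G)=1$.
   Context: Graphs are finite, loopless, with symmetric edge sets; $K_c$ is the complete graph on $c$ vertices; $\chi(G)$ is the usual chromatic number. For $|I|=n$, $|O|=m$ ($O=\{0,\dots,m-1\}$), $\mathbb F(n,m)$ is the free product of $n$ copies of the cyclic group of order $m$ with generators $u_v$, $\mathbb C[\mathbb F(n,m)]$ its group $*$-algebra, $\omega=e^{2\pi i/m}$, $e_{v,a}=\frac1m\sum_{k=0}^{m-1}(\omega^{-a}u_v)^k$. For graphs $G,H$, the graph homomorphism game has $I=V(G)$, $O=V(H)$, $\lambda(v,w,a,b)=0$ iff ($v=w$, $a\ne b$) or ($(v,w)\in E(G)$, $(a,b)\notin E(H)$); $\mathcal I(G,H)$ is the two-sided $*$-ideal generated by $\{e_{v,a}e_{w,b}:\lambda(v,w,a,b)=0\}$, $\mathcal A(G,H)$ the quotient, and $\chi_{alg}(G)=\min\{c:\mathcal A(G,K_c)\ne0\}$. *)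

theory Defs
  imports Complex_Main
begin

definition graph :: "'v set \<Rightarrow> ('v \<times> 'v) set \<Rightarrow> bool" where
  "graph V E \<longleftrightarrow> finite V \<and> E \<subseteq> V \<times> V \<and> sym E \<and> (\<forall>v. (v, v) \<notin> E)"

definition Kc_edges :: "nat \<Rightarrow> (nat \<times> nat) set" where
  "Kc_edges c = {(a, b). a < c \<and> b < c \<and> a \<noteq> b}"

definition chromatic_number :: "'v set \<Rightarrow> ('v \<times> 'v) set \<Rightarrow> nat" where
  "chromatic_number V E = (LEAST c. \<exists>f. (\<forall>v\<in>V. f v < c) \<and> (\<forall>(v, w)\<in>E. f v \<noteq> f w))"

section \<open>The free product F(V,m) of copies of Z/m, as reduced words\<close>

text \<open>A letter (v,k) stands for u_v^k. Reduced words: 1 <= k < m, v in V,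
  adjacent letters with distinct generators.\<close>
fun reduced_word :: "nat \<Rightarrow> 'v set \<Rightarrow> ('v \<times> nat) list \<Rightarrow> bool" where
  "reduced_word m V [] = True"
| "reduced_word m V [(v, k)] = (v \<in> V \<and> 0 < k \<and> k < m)"
| "reduced_word m V ((v, k) # (u, j) # w) =
     (v \<in> V \<and> 0 < k \<and> k < m \<and> v \<noteq> u \<and> reduced_word m V ((u, j) # w))"

fun red_cons :: "nat \<Rightarrow> 'v \<times> nat \<Rightarrow> ('v \<times> nat) list \<Rightarrow> ('v \<times> nat) list" where
  "red_cons m (v, k) w =
     (if k mod m = 0 then w else
      (case w of
         [] \<Rightarrow> [(v, k mod m)]
       | (u, j) # w' \<Rightarrow>
           (if u = v then (if (k + j) mod m = 0 then w' else (v, (k + j) mod m) # w')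
            else (v, k mod m) # w)))"

definition grp_mult :: "nat \<Rightarrow> ('v \<times> nat) list \<Rightarrow> ('v \<times> nat) list \<Rightarrow> ('v \<times> nat) list" where
  "grp_mult m x y = foldr (red_cons m) x y"

definition grp_inv :: "nat \<Rightarrow> ('v \<times> nat) list \<Rightarrow> ('v \<times> nat) list" where
  "grp_inv m x = rev (map (\<lambda>(v, k). (v, m - k)) x)"

definition GA :: "nat \<Rightarrow> 'v set \<Rightarrow> (('v \<times> nat) list \<Rightarrow> complex) set" where
  "GA m V = {f. finite {w. f w \<noteq> 0} \<and> (\<forall>w. f w \<noteq> 0 \<longrightarrow> reduced_word m V w)}"

definition ga_one :: "('v \<times> nat) list \<Rightarrow> complex" where
  "ga_one = (\<lambda>w. if w = [] then 1 else 0)"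

definition ga_add :: "(('v \<times> nat) list \<Rightarrow> complex) \<Rightarrow> (('v \<times> nat) list \<Rightarrow> complex) \<Rightarrow> ('v \<times> nat) list \<Rightarrow> complex" where
  "ga_add f g = (\<lambda>w. f w + g w)"

definition ga_smult :: "complex \<Rightarrow> (('v \<times> nat) list \<Rightarrow> complex) \<Rightarrow> ('v \<times> nat) list \<Rightarrow> complex" where
  "ga_smult c f = (\<lambda>w. c * f w)"

definition ga_mult :: "nat \<Rightarrow> (('v \<times> nat) list \<Rightarrow> complex) \<Rightarrow> (('v \<times> nat) list \<Rightarrow> complex) \<Rightarrow> ('v \<times> nat) list \<Rightarrow> complex" where
  "ga_mult m f g = (\<lambda>w. \<Sum>(x, y) \<in> {(x, y). f x \<noteq> 0 \<and> g y \<noteq> 0 \<and> grp_mult m x y = w}. f x * g y)"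

definition ga_star :: "nat \<Rightarrow> (('v \<times> nat) list \<Rightarrow> complex) \<Rightarrow> ('v \<times> nat) list \<Rightarrow> complex" where
  "ga_star m f = (\<lambda>w. cnj (f (grp_inv m w)))"

fun ga_pow :: "nat \<Rightarrow> (('v \<times> nat) list \<Rightarrow> complex) \<Rightarrow> nat \<Rightarrow> ('v \<times> nat) list \<Rightarrow> complex" where
  "ga_pow m f 0 = ga_one"
| "ga_pow m f (Suc k) = ga_mult m f (ga_pow m f k)"

text \<open>The generator u_v (the group element u_v, which is trivial when m = 1).\<close>
definition ga_gen :: "nat \<Rightarrow> 'v \<Rightarrow> ('v \<times> nat) list \<Rightarrow> complex" where
  "ga_gen m v = (\<lambda>w. if w = red_cons m (v, 1) [] then 1 else 0)"

definition omega :: "nat \<Rightarrow> complex" where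
  "omega m = cis (2 * pi / real m)"

definition proj_e :: "nat \<Rightarrow> 'v \<Rightarrow> nat \<Rightarrow> ('v \<times> nat) list \<Rightarrow> complex" where
  "proj_e m v a = (\<lambda>w. (1 / of_nat m) *
      (\<Sum>k<m. ga_pow m (ga_smult (inverse (omega m) ^ a) (ga_gen m v)) k w))"

inductive_set star_ideal ::
  "nat \<Rightarrow> 'v set \<Rightarrow> (('v \<times> nat) list \<Rightarrow> complex) set \<Rightarrow> (('v \<times> nat) list \<Rightarrow> complex) set"
  for m :: nat and V :: "'v set" and S :: "(('v \<times> nat) list \<Rightarrow> complex) set" where
  gen: "s \<in> S \<Longrightarrow> s \<in> star_ideal m V S"
| zero: "(\<lambda>w. 0) \<in> star_ideal m V S"
| add: "x \<in> star_ideal m V S \<Longrightarrow> y \<in> star_ideal m V S \<Longrightarrow> ga_add x y \<in> star_ideal m V S"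
| lmult: "a \<in> GA m V \<Longrightarrow> x \<in> star_ideal m V S \<Longrightarrow> ga_mult m a x \<in> star_ideal m V S"
| rmult: "a \<in> GA m V \<Longrightarrow> x \<in> star_ideal m V S \<Longrightarrow> ga_mult m x a \<in> star_ideal m V S"
| star: "x \<in> star_ideal m V S \<Longrightarrow> ga_star m x \<in> star_ideal m V S"

text \<open>Generators of I(G,H) for the graph homomorphism game with G = (V,E),
  H with vertex set {0,...,m-1} and edge set EH.\<close>
definition hom_ideal_gens ::
  "'v set \<Rightarrow> ('v \<times> 'v) set \<Rightarrow> (nat \<times> nat) set \<Rightarrow> nat \<Rightarrow> (('v \<times> nat) list \<Rightarrow> complex) set" where
  "hom_ideal_gens V E EH m =
     {ga_mult m (proj_e m v a) (proj_e m w b) | v w a b.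
        v \<in> V \<and> w \<in> V \<and> a < m \<and> b < m \<and>
        ((v = w \<and> a \<noteq> b) \<or> ((v, w) \<in> E \<and> (a, b) \<notin> EH))}"

definition hom_ideal :: "'v set \<Rightarrow> ('v \<times> 'v) set \<Rightarrow> (nat \<times> nat) set \<Rightarrow> nat \<Rightarrow> (('v \<times> nat) list \<Rightarrow> complex) set" where
  "hom_ideal V E EH m = star_ideal m V (hom_ideal_gens V E EH m)"

text \<open>A(G,H) = C[F]/I(G,H) is nonzero iff 1 is not in I(G,H).\<close>
definition hom_algebra_nonzero :: "'v set \<Rightarrow> ('v \<times> 'v) set \<Rightarrow> (nat \<times> nat) set \<Rightarrow> nat \<Rightarrow> bool" where
  "hom_algebra_nonzero V E EH m \<longleftrightarrow> ga_one \<notin> hom_ideal V E EH m"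

definition chi_alg :: "'v set \<Rightarrow> ('v \<times> 'v) set \<Rightarrow> nat" where
  "chi_alg V E = (LEAST c. 1 \<le> c \<and> hom_algebra_nonzero V E (Kc_edges c) c)"

end

theory Submission
  imports Defs
begin


definition lok :: "nat \<Rightarrow> ('v \<times> nat) list \<Rightarrow> bool" where
  "lok m w \<longleftrightarrow> (\<forall>(v,k)\<in>set w. 0 < k \<and> k < m)"

definition supp :: "(('v \<times> nat) list \<Rightarrow> complex) \<Rightarrow> ('v \<times> nat) list set" where
  "supp f = {w. f w \<noteq> 0}"

definition Good :: "nat \<Rightarrow> (('v \<times> nat) list \<Rightarrow> complex) \<Rightarrow> bool" where
  "Good m f \<longleftrightarrow> finite (supp f) \<and> (\<forall>w\<in>supp f. lok m w)"

definition chi :: "('v \<Rightarrow> complex) \<Rightarrow> ('v \<times> nat) list \<Rightarrow> complex" where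
  "chi z w = prod_list (map (\<lambda>(v,k). z v ^ k) w)"

definition phi :: "('v \<Rightarrow> complex) \<Rightarrow> (('v \<times> nat) list \<Rightarrow> complex) \<Rightarrow> complex" where
  "phi z f = (\<Sum>w\<in>supp f. f w * chi z w)"

lemma phi_sup:
  assumes "finite S" "supp f \<subseteq> S"
  shows "phi z f = (\<Sum>w\<in>S. f w * chi z w)"
  unfolding phi_def
  by (rule sum.mono_neutral_left) (use assms in \<open>auto simp: supp_def\<close>)

lemma pow_mod_m:
  fixes x :: complex
  assumes "x ^ m = 1"
  shows "x ^ k = x ^ (k mod m)"
proof -
  have "x ^ k = (x ^ m) ^ (k div m) * x ^ (k mod m)"
    by (metis div_mult_mod_eq mult.commute power_add power_mult)
  then show ?thesis using assms by simp
qed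

lemma chi_Cons: "chi z ((v,k) # w) = z v ^ k * chi z w"
  by (simp add: chi_def)

lemma chi_Nil: "chi z [] = 1" by (simp add: chi_def)

lemma chi_red_cons:
  assumes "\<forall>v. z v ^ m = 1"
  shows "chi z (red_cons m (v,k) w) = z v ^ k * chi z w"
proof -
  have zk: "z v ^ k = z v ^ (k mod m)" using pow_mod_m assms by blast
  show ?thesis
  proof (cases "k mod m = 0")
    case True then show ?thesis using zk by simp
  next
    case False
    show ?thesis
    proof (cases w)
      case Nil then show ?thesis using False zk by (simp add: chi_Cons chi_Nil)
    next
      case (Cons p w')
      obtain u j where p: "p = (u,j)" by (cases p)
      show ?thesis
      proof (cases "u = v")
        case True
        have e: "z v ^ (k + j) = z v ^ ((k+j) mod m)" using pow_mod_m assms by blast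
        have "z v ^ k * chi z w = z v ^ (k+j) * chi z w'"
          using Cons p True by (simp add: chi_Cons power_add)
        then show ?thesis using Cons p True False e by (auto simp: chi_Cons)
      next
        case F: False
        then show ?thesis using Cons p False zk by (simp add: chi_Cons)
      qed
    qed
  qed
qed

lemma chi_grp_mult:
  assumes "\<forall>v. z v ^ m = 1"
  shows "chi z (grp_mult m x y) = chi z x * chi z y"
  unfolding grp_mult_def
proof (induction x)
  case Nil then show ?case by (simp add: chi_Nil)
next
  case (Cons p x)
  obtain v k where "p = (v,k)" by (cases p)
  then show ?case using Cons chi_red_cons[OF assms] by (simp add: chi_Cons)
qed

lemma lok_red_cons: "0 < m \<Longrightarrow> lok m w \<Longrightarrow> lok m (red_cons m (v,k) w)"
  by (auto simp: lok_def split: list.splits)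

lemma lok_grp_mult: "0 < m \<Longrightarrow> lok m y \<Longrightarrow> lok m (grp_mult m x y)"
  unfolding grp_mult_def
proof (induction x)
  case Nil then show ?case by simp
next
  case (Cons p x)
  obtain v k where "p = (v,k)" by (cases p)
  then show ?case using Cons lok_red_cons by (simp del: red_cons.simps)
qed

lemma supp_mult: "supp (ga_mult m f g) \<subseteq> (\<lambda>(x,y). grp_mult m x y) ` (supp f \<times> supp g)"
proof
  fix w assume "w \<in> supp (ga_mult m f g)"
  have "{(x, y). f x \<noteq> 0 \<and> g y \<noteq> 0 \<and> grp_mult m x y = w} \<noteq> {}"
  proof (rule notI)
    assume e: "{(x, y). f x \<noteq> 0 \<and> g y \<noteq> 0 \<and> grp_mult m x y = w} = {}"
    then have "ga_mult m f g w = 0" unfolding ga_mult_def by (simp only: e sum.empty)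
    then show False using \<open>w \<in> supp (ga_mult m f g)\<close> by (simp add: supp_def)
  qed
  then show "w \<in> (\<lambda>(x,y). grp_mult m x y) ` (supp f \<times> supp g)" by (force simp: supp_def)
qed

lemma Good_mult: "0 < m \<Longrightarrow> Good m f \<Longrightarrow> Good m g \<Longrightarrow> Good m (ga_mult m f g)"
  unfolding Good_def
proof (intro conjI ballI)
  assume a: "0 < m" "finite (supp f) \<and> (\<forall>w\<in>supp f. lok m w)" "finite (supp g) \<and> (\<forall>w\<in>supp g. lok m w)"
  show "finite (supp (ga_mult m f g))"
    using a supp_mult[of m f g] by (meson finite_SigmaI finite_imageI finite_subset)
  fix w assume "w \<in> supp (ga_mult m f g)"
  then obtain x y where "y \<in> supp g" "w = grp_mult m x y" using supp_mult[of m f g] by force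
  then show "lok m w" using a lok_grp_mult by blast
qed

lemma phi_mult:
  assumes zm: "\<forall>v. z v ^ m = 1" and f: "finite (supp f)" and g: "finite (supp g)"
  shows "phi z (ga_mult m f g) = phi z f * phi z g"
proof -
  let ?A = "supp f \<times> supp g"
  let ?gm = "\<lambda>(x,y). grp_mult m x y"
  have A: "finite ?A" using f g by simp
  have "phi z (ga_mult m f g) = (\<Sum>w\<in>?gm ` ?A. ga_mult m f g w * chi z w)"
    by (rule phi_sup) (use A supp_mult[of m f g] in auto)
  also have "\<dots> = (\<Sum>w\<in>?gm ` ?A. \<Sum>p\<in>{p\<in>?A. ?gm p = w}. f (fst p) * g (snd p) * chi z w)"
  proof (rule sum.cong[OF refl])
    fix w
    have "{(x, y). f x \<noteq> 0 \<and> g y \<noteq> 0 \<and> grp_mult m x y = w} = {p\<in>?A. ?gm p = w}"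
      by (auto simp: supp_def)
    then show "ga_mult m f g w * chi z w = (\<Sum>p\<in>{p\<in>?A. ?gm p = w}. f (fst p) * g (snd p) * chi z w)"
      by (simp add: ga_mult_def sum_distrib_right case_prod_beta)
  qed
  also have "\<dots> = (\<Sum>w\<in>?gm ` ?A. \<Sum>p\<in>{p\<in>?A. ?gm p = w}. f (fst p) * g (snd p) * chi z (?gm p))"
    by (intro sum.cong refl) auto
  also have "\<dots> = (\<Sum>p\<in>?A. f (fst p) * g (snd p) * chi z (?gm p))"
    by (rule sum.group) (use A in auto)
  also have "\<dots> = (\<Sum>(x,y)\<in>?A. (f x * chi z x) * (g y * chi z y))"
    by (intro sum.cong refl) (auto simp: chi_grp_mult[OF zm] mult_ac)
  also have "\<dots> = (\<Sum>x\<in>supp f. \<Sum>y\<in>supp g. (f x * chi z x) * (g y * chi z y))"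
    by (simp add: sum.cartesian_product)
  also have "\<dots> = phi z f * phi z g"
    by (simp add: phi_def sum_product)
  finally show ?thesis .
qed



lemma inv_Cons: "grp_inv m (p # w) = grp_inv m w @ [(fst p, m - snd p)]"
  by (simp add: grp_inv_def case_prod_beta)

lemma inv_inv: "lok m w \<Longrightarrow> grp_inv m (grp_inv m w) = w"
  by (induction w) (auto simp: grp_inv_def lok_def)

lemma lok_inv: "lok m w \<Longrightarrow> lok m (grp_inv m w)"
  by (auto simp: grp_inv_def lok_def)

lemma lok_of_inv: "lok m (grp_inv m w) \<Longrightarrow> lok m w"
  by (auto simp: grp_inv_def lok_def)

lemma chi_append: "chi z (a @ b) = chi z a * chi z b"
  by (simp add: chi_def)

lemma letter_inv:
  fixes x :: complex
  assumes "cmod x = 1" "x ^ m = 1" "k \<le> m"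
  shows "x ^ (m - k) = cnj (x ^ k)"
proof -
  have 1: "x ^ (m - k) * x ^ k = 1" using assms(2,3) by (metis le_add_diff_inverse2 power_add)
  have "complex_of_real ((cmod (x^k))\<^sup>2) = x^k * cnj (x^k)" by (rule complex_norm_square)
  then have 2: "cnj (x ^ k) * x ^ k = 1" using assms by (simp add: norm_power mult.commute)
  have "x \<noteq> 0" using assms(1) by auto
  then have "x ^ k \<noteq> 0" by simp
  then show ?thesis using 1 2 by (metis mult_right_cancel)
qed

lemma chi_inv:
  assumes zm: "\<forall>v. z v ^ m = 1" and zn: "\<forall>v. cmod (z v) = 1"
  shows "lok m w \<Longrightarrow> chi z (grp_inv m w) = cnj (chi z w)"
proof (induction w)
  case Nil then show ?case by (simp add: grp_inv_def chi_Nil)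
next
  case (Cons p w)
  obtain v k where p: "p = (v,k)" by (cases p)
  have lw: "lok m w" and k: "k \<le> m" using Cons.prems p by (auto simp: lok_def)
  have "chi z (grp_inv m (p # w)) = chi z (grp_inv m w) * z v ^ (m - k)"
    by (simp add: inv_Cons chi_append p chi_def)
  also have "\<dots> = cnj (chi z w) * cnj (z v ^ k)"
    using Cons.IH[OF lw] letter_inv[of "z v" m k] zm zn k by simp
  finally show ?case by (simp add: p chi_Cons)
qed

lemma supp_star: assumes "Good m f" shows "supp (ga_star m f) = grp_inv m ` supp f"
proof
  show "supp (ga_star m f) \<subseteq> grp_inv m ` supp f"
  proof
    fix w assume "w \<in> supp (ga_star m f)"
    then have w: "grp_inv m w \<in> supp f" by (simp add: supp_def ga_star_def)
    then have "lok m (grp_inv m w)" using assms by (auto simp: Good_def)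
    then have "lok m w" by (rule lok_of_inv)
    then have "w = grp_inv m (grp_inv m w)" by (simp add: inv_inv)
    then show "w \<in> grp_inv m ` supp f" using w by blast
  qed
next
  show "grp_inv m ` supp f \<subseteq> supp (ga_star m f)"
    using assms by (auto simp: Good_def supp_def ga_star_def inv_inv)
qed

lemma Good_star: "Good m f \<Longrightarrow> Good m (ga_star m f)"
  using supp_star[of m f] by (auto simp: Good_def lok_inv)

lemma phi_star:
  assumes g: "Good m f" and zm: "\<forall>v. z v ^ m = 1" and zn: "\<forall>v. cmod (z v) = 1"
  shows "phi z (ga_star m f) = cnj (phi z f)"
proof -
  have inj: "inj_on (grp_inv m) (supp f)"
    by (rule inj_on_inverseI[where g="grp_inv m"]) (use g in \<open>auto simp: Good_def inv_inv\<close>)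
  have "phi z (ga_star m f) = (\<Sum>w\<in>grp_inv m ` supp f. ga_star m f w * chi z w)"
    unfolding phi_def supp_star[OF g] ..
  also have "\<dots> = (\<Sum>u\<in>supp f. ga_star m f (grp_inv m u) * chi z (grp_inv m u))"
    by (simp add: sum.reindex[OF inj])
  also have "\<dots> = (\<Sum>u\<in>supp f. cnj (f u * chi z u))"
    by (rule sum.cong) (use g in \<open>auto simp: ga_star_def inv_inv chi_inv[OF zm zn] Good_def\<close>)
  also have "\<dots> = cnj (phi z f)" by (simp add: phi_def cnj_sum)
  finally show ?thesis .
qed

lemma supp_one: "supp ga_one = {[]}"
  by (auto simp: supp_def ga_one_def)

lemma Good_one: "Good m ga_one" by (simp add: Good_def supp_one lok_def)

lemma phi_one: "phi z ga_one = 1"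
  unfolding phi_def supp_one by (simp add: ga_one_def chi_Nil)

lemma gen_eq: "2 \<le> m \<Longrightarrow> ga_gen m v = (\<lambda>w. if w = [(v,1)] then 1 else 0)"
  by (simp add: ga_gen_def)

lemma Good_gen: "2 \<le> m \<Longrightarrow> Good m (ga_gen m v)"
  by (simp add: gen_eq Good_def supp_def lok_def)

lemma phi_gen: "2 \<le> m \<Longrightarrow> phi z (ga_gen m v) = z v"
proof -
  assume m: "2 \<le> m"
  have "supp (ga_gen m v) = {[(v,1)]}" using m by (simp add: gen_eq supp_def)
  then show ?thesis using m by (simp add: phi_def gen_eq chi_def)
qed

lemma supp_smult: "supp (ga_smult c f) \<subseteq> supp f"
  by (auto simp: supp_def ga_smult_def)

lemma Good_smult: "Good m f \<Longrightarrow> Good m (ga_smult c f)"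
  using supp_smult[of c f] by (auto simp: Good_def intro: finite_subset)

lemma phi_smult: "Good m f \<Longrightarrow> phi z (ga_smult c f) = c * phi z f"
proof -
  assume g: "Good m f"
  have "phi z (ga_smult c f) = (\<Sum>w\<in>supp f. ga_smult c f w * chi z w)"
    using g supp_smult[of c f] by (intro phi_sup) (auto simp: Good_def)
  also have "\<dots> = c * (\<Sum>w\<in>supp f. f w * chi z w)"
    unfolding sum_distrib_left ga_smult_def by (simp add: mult.assoc)
  finally show ?thesis by (simp add: phi_def)
qed

lemma pow_props:
  assumes "0 < m" "Good m f" "\<forall>v. z v ^ m = 1"
  shows "Good m (ga_pow m f k) \<and> phi z (ga_pow m f k) = phi z f ^ k"
proof (induction k)
  case 0 then show ?case by (simp add: Good_one phi_one)
next
  case (Suc k)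
  have "Good m (ga_pow m f (Suc k))" using Suc assms Good_mult[of m f "ga_pow m f k"] by simp
  moreover have "phi z (ga_pow m f (Suc k)) = phi z f ^ Suc k"
    using Suc assms phi_mult[of z m f "ga_pow m f k"] by (simp add: Good_def)
  ultimately show ?case by blast
qed



lemma red_lok: "reduced_word m V w \<Longrightarrow> lok m w"
  by (induction m V w rule: reduced_word.induct) (auto simp: lok_def)

lemma GA_Good: "a \<in> GA m V \<Longrightarrow> Good m a"
  by (auto simp: GA_def Good_def supp_def red_lok)

lemma Good_zero: "Good m (\<lambda>w. 0)" by (simp add: Good_def supp_def)
lemma phi_zero: "phi z (\<lambda>w. 0) = 0" by (simp add: phi_def supp_def)

lemma supp_add: "supp (ga_add x y) \<subseteq> supp x \<union> supp y"
  by (auto simp: supp_def ga_add_def)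

lemma Good_add: "Good m x \<Longrightarrow> Good m y \<Longrightarrow> Good m (ga_add x y)"
  using supp_add[of x y] unfolding Good_def by (meson UnE finite_Un rev_finite_subset subsetD)

lemma phi_add: assumes "Good m x" "Good m y" shows "phi z (ga_add x y) = phi z x + phi z y"
proof -
  let ?S = "supp x \<union> supp y"
  have f: "finite ?S" using assms by (simp add: Good_def)
  have "phi z (ga_add x y) = (\<Sum>w\<in>?S. ga_add x y w * chi z w)"
    using f supp_add[of x y] by (rule phi_sup)
  also have "\<dots> = (\<Sum>w\<in>?S. x w * chi z w) + (\<Sum>w\<in>?S. y w * chi z w)"
    by (simp add: ga_add_def distrib_right sum.distrib)
  also have "\<dots> = phi z x + phi z y"
    using f by (simp add: phi_sup[symmetric])
  finally show ?thesis .
qed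

lemma proj_props:
  assumes m: "2 \<le> m" and zm: "\<forall>v. z v ^ m = 1"
  shows "Good m (proj_e m v a) \<and>
    phi z (proj_e m v a) = (1 / of_nat m) * (\<Sum>k<m. (inverse (omega m) ^ a * z v) ^ k)"
proof -
  define s where "s = ga_smult (inverse (omega m) ^ a) (ga_gen m v)"
  define P where "P k = ga_pow m s k" for k
  have gs: "Good m s" using m by (simp add: s_def Good_smult Good_gen)
  have ps: "phi z s = inverse (omega m) ^ a * z v"
    unfolding s_def by (simp only: phi_smult[OF Good_gen[OF m]] phi_gen[OF m])
  have gP: "Good m (P k)" and pP: "phi z (P k) = (inverse (omega m) ^ a * z v) ^ k" for k
    using pow_props[of m s z k] m gs zm ps by (auto simp: P_def)
  define S where "S = (\<Union>k<m. supp (P k))"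
  have fS: "finite S" using gP by (auto simp: S_def Good_def)
  have e: "proj_e m v a = (\<lambda>w. (1 / of_nat m) * (\<Sum>k<m. P k w))"
    by (simp add: proj_e_def P_def s_def)
  have sup: "supp (proj_e m v a) \<subseteq> S"
  proof
    fix w assume w: "w \<in> supp (proj_e m v a)"
    show "w \<in> S"
    proof (rule ccontr)
      assume "w \<notin> S"
      then have "\<forall>k<m. P k w = 0" by (auto simp: S_def supp_def)
      then have "proj_e m v a w = 0" by (simp add: e)
      then show False using w by (simp add: supp_def)
    qed
  qed
  have "Good m (proj_e m v a)"
    unfolding Good_def
  proof
    show "finite (supp (proj_e m v a))" using fS sup by (rule finite_subset[rotated])
    show "\<forall>w\<in>supp (proj_e m v a). lok m w"
      using sup gP by (force simp: S_def Good_def)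
  qed
  moreover have "phi z (proj_e m v a) = (1 / of_nat m) * (\<Sum>k<m. phi z (P k))"
  proof -
    have "phi z (proj_e m v a) = (\<Sum>w\<in>S. proj_e m v a w * chi z w)"
      using fS sup by (rule phi_sup)
    also have "\<dots> = (1 / of_nat m) * (\<Sum>k<m. \<Sum>w\<in>S. P k w * chi z w)"
      by (simp add: e sum_distrib_left sum_distrib_right sum.swap[of _ S] mult.assoc)
    also have "\<dots> = (1 / of_nat m) * (\<Sum>k<m. phi z (P k))"
    proof -
      have "\<And>k. k < m \<Longrightarrow> (\<Sum>w\<in>S. P k w * chi z w) = phi z (P k)"
        by (rule phi_sup[symmetric]) (use fS in \<open>auto simp: S_def\<close>)
      then show ?thesis by simp
    qed
    finally show ?thesis .
  qed
  ultimately show ?thesis using pP by simp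
qed

lemma omega_pow: "omega m ^ n = cis (2 * pi * real n / real m)"
  by (simp add: omega_def DeMoivre) (rule arg_cong[where f=cis]; simp add: field_simps)

lemma omega_m: "0 < m \<Longrightarrow> omega m ^ m = 1"
  by (simp add: omega_pow)

lemma omega_norm: "cmod (omega m) = 1"
  by (simp add: omega_def)

lemma omega_ne1: assumes "0 < j" "j < m" shows "omega m ^ j \<noteq> 1"
proof
  assume "omega m ^ j = 1"
  then have "cos (2 * pi * real j / real m) = 1"
    by (metis omega_pow cis.sel(1) one_complex.sel(1))
  then obtain x :: int where x: "2 * pi * real j / real m = real_of_int x * 2 * pi"
    using cos_one_2pi_int by blast
  then have "2 * pi * (real j / real m) = 2 * pi * real_of_int x" by (simp add: algebra_simps)
  then have "real j / real m = real_of_int x"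
    by (metis (no_types, opaque_lifting) mult_cancel_left pi_neq_zero times_divide_eq_right zero_neq_numeral mult_eq_0_iff)
  moreover have "0 < real j / real m" "real j / real m < 1" using assms by auto
  ultimately have "0 < real_of_int x" "real_of_int x < 1" by simp_all
  then have "0 < x" "x < 1" by simp_all
  then show False by simp
qed

lemma omega_inj: assumes "i < m" "j < m" "omega m ^ i = omega m ^ j" shows "i = j"
proof (rule ccontr)
  assume ne: "i \<noteq> j"
  have nz: "omega m \<noteq> 0" using omega_norm[of m] by auto
  have key: "\<And>a b. a < b \<Longrightarrow> b < m \<Longrightarrow> omega m ^ a = omega m ^ b \<Longrightarrow> False"
  proof -
    fix a b assume ab: "a < b" "b < m" "omega m ^ a = omega m ^ b"
    have "omega m ^ b = omega m ^ a * omega m ^ (b - a)"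
      using ab by (metis le_add_diff_inverse less_imp_le power_add)
    then have "omega m ^ (b - a) = 1" using ab nz by simp
    then show False using omega_ne1[of "b - a" m] ab by simp
  qed
  show False
    using ne assms key[of i j] key[of j i] by (cases "i < j") auto
qed

lemma geo_sum: fixes q :: complex assumes "q ^ m = 1"
  shows "(\<Sum>k<m. q ^ k) = (if q = 1 then of_nat m else 0)"
  using assms by (simp add: geometric_sum)



lemma phi_proj:
  assumes m: "2 \<le> m" and zm: "\<forall>v. z v ^ m = 1" and zv: "z v = omega m ^ c"
    and c: "c < m" and a: "a < m"
  shows "phi z (proj_e m v a) = (if a = c then 1 else 0)"
proof -
  let ?w = "omega m"
  define q where "q = inverse ?w ^ a * ?w ^ c"
  have nz: "?w \<noteq> 0" using omega_norm[of m] by auto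
  have wm: "?w ^ m = 1" using m omega_m by simp
  have "q ^ m = (inverse ?w ^ a) ^ m * (?w ^ c) ^ m" by (simp add: q_def power_mult_distrib)
  also have "(?w ^ c) ^ m = (?w ^ m) ^ c" by (metis power_mult mult.commute)
  also have "(inverse ?w ^ a) ^ m = inverse ((?w ^ m) ^ a)"
    by (metis power_inverse power_mult mult.commute)
  finally have qm: "q ^ m = 1" using wm by simp
  have q1: "q = 1 \<longleftrightarrow> a = c"
  proof
    assume "q = 1"
    then have "inverse (?w ^ a) * ?w ^ c = 1" by (simp add: q_def power_inverse)
    then have "?w ^ c = ?w ^ a" using nz by (simp add: field_simps)
    then show "a = c" using omega_inj c a by metis
  next
    assume "a = c"
    then show "q = 1" using nz by (simp add: q_def power_inverse)
  qed
  have "phi z (proj_e m v a) = (1 / of_nat m) * (\<Sum>k<m. q ^ k)"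
    using proj_props[OF m zm, of v a] zv by (simp add: q_def)
  also have "\<dots> = (if a = c then 1 else 0)"
    using geo_sum[OF qm] q1 m by simp
  finally show ?thesis .
qed

lemma nonzero_of_colouring:
  fixes V :: "'v set" and E :: "('v \<times> 'v) set"
  assumes m: "2 \<le> m" and col: "\<forall>v\<in>V. col v < m"
    and proper: "\<forall>(v, w)\<in>E. col v \<noteq> col w" and EV: "E \<subseteq> V \<times> V"
  shows "hom_algebra_nonzero V E (Kc_edges m) m"
proof -
  define z where "z v = omega m ^ col v" for v
  have m0: "0 < m" using m by simp
  have zm: "\<forall>v. z v ^ m = 1"
  proof
    fix v
    have "z v ^ m = (omega m ^ m) ^ col v" by (simp add: z_def power_mult[symmetric] mult.commute)
    then show "z v ^ m = 1" using omega_m[OF m0] by simp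
  qed
  have zn: "\<forall>v. cmod (z v) = 1" by (simp add: z_def norm_power omega_norm)
  have pe: "phi z (proj_e m v a) = (if a = col v then 1 else 0)" if "v \<in> V" "a < m" for v a
    using phi_proj[OF m zm z_def[of v], of a] col that by simp
  have ge: "Good m (proj_e m v a)" for v :: 'v and a using proj_props[OF m zm] by blast
  have gens: "Good m s \<and> phi z s = 0" if sin: "s \<in> hom_ideal_gens V E (Kc_edges m) m" for s
  proof -
    obtain v w a b where s: "s = ga_mult m (proj_e m v a) (proj_e m w b)"
      and vw: "v \<in> V" "w \<in> V" "a < m" "b < m"
      and cond: "(v = w \<and> a \<noteq> b) \<or> ((v, w) \<in> E \<and> (a, b) \<notin> Kc_edges m)"
      using sin unfolding hom_ideal_gens_def by blast
    have "phi z s = phi z (proj_e m v a) * phi z (proj_e m w b)"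
      unfolding s using phi_mult[OF zm] ge by (simp add: Good_def)
    also have "\<dots> = 0"
    proof -
      have "\<not> (a = col v \<and> b = col w)"
      proof
        assume ab: "a = col v \<and> b = col w"
        show False
        proof (cases "v = w \<and> a \<noteq> b")
          case True then show False using ab by auto
        next
          case False
          then have "(v, w) \<in> E" "(a, b) \<notin> Kc_edges m" using cond by auto
          then have "a = b" using vw by (auto simp: Kc_edges_def)
          then show False using ab proper \<open>(v, w) \<in> E\<close> by auto
        qed
      qed
      then show ?thesis using pe vw by auto
    qed
    finally show ?thesis using s Good_mult[OF m0 ge ge] by simp
  qed
  have inv: "Good m x \<and> phi z x = 0" if "x \<in> star_ideal m V (hom_ideal_gens V E (Kc_edges m) m)" for x
    using that
  proof (induction rule: star_ideal.induct)
    case (gen s) then show ?case using gens by blast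
  next
    case zero then show ?case by (simp add: Good_zero phi_zero)
  next
    case (add x y) then show ?case using Good_add[of m x y] phi_add[of m x y z] by simp
  next
    case (lmult a x) then show ?case
      using GA_Good[of a m V] Good_mult[OF m0, of a x] phi_mult[OF zm, of a x] by (simp add: Good_def)
  next
    case (rmult a x) then show ?case
      using GA_Good[of a m V] Good_mult[OF m0, of x a] phi_mult[OF zm, of x a] by (simp add: Good_def)
  next
    case (star x) then show ?case
      using Good_star[of m x] phi_star[OF _ zm zn, of x] by simp
  qed
  show ?thesis
    unfolding hom_algebra_nonzero_def hom_ideal_def
    using inv[of ga_one] phi_one[of z] by auto
qed



lemma proj1: "proj_e 1 v a = ga_one"
  by (simp add: proj_e_def fun_eq_iff)

lemma mult_one1: "ga_mult 1 ga_one ga_one = ga_one"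
proof
  fix w :: "('a \<times> nat) list"
  have "{(x, y). ga_one x \<noteq> (0::complex) \<and> ga_one y \<noteq> (0::complex) \<and> grp_mult 1 x y = w} =
        (if w = [] then {([], [])} else {})"
    by (auto simp: ga_one_def grp_mult_def)
  then show "ga_mult 1 ga_one ga_one w = ga_one w"
    by (simp add: ga_mult_def ga_one_def)
qed

lemma zero1:
  assumes "E = {}"
  shows "hom_algebra_nonzero V E (Kc_edges 1) 1"
proof -
  have g: "hom_ideal_gens V E (Kc_edges 1) 1 = {}"
    using assms by (auto simp: hom_ideal_gens_def)
  have z: "x = (\<lambda>w. 0)" if "x \<in> star_ideal 1 V {}" for x :: "('a \<times> nat) list \<Rightarrow> complex"
    using that
  proof (induction rule: star_ideal.induct)
    case (gen s) then show ?case by simp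
  next
    case zero then show ?case by simp
  next
    case (add x y) then show ?case by (simp add: ga_add_def)
  next
    case (lmult a x) then show ?case by (simp add: ga_mult_def)
  next
    case (rmult a x) then show ?case by (simp add: ga_mult_def)
  next
    case (star x) then show ?case by (simp add: ga_star_def)
  qed
  have "ga_one \<noteq> (\<lambda>w::('a \<times> nat) list. 0::complex)"
    by (metis ga_one_def one_neq_zero)
  then show ?thesis unfolding hom_algebra_nonzero_def hom_ideal_def g using z by blast
qed

lemma nonzero1:
  assumes "(v, w) \<in> E" "E \<subseteq> V \<times> V"
  shows "\<not> hom_algebra_nonzero V E (Kc_edges 1) 1"
proof -
  have "ga_mult 1 (proj_e 1 v 0) (proj_e 1 w 0) \<in> hom_ideal_gens V E (Kc_edges 1) 1"
    using assms unfolding hom_ideal_gens_def Kc_edges_def by blast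
  then have "ga_one \<in> hom_ideal V E (Kc_edges 1) 1"
    unfolding hom_ideal_def proj1 mult_one1 by (rule star_ideal.gen)
  then show ?thesis by (simp add: hom_algebra_nonzero_def)
qed

theorem mainTheorem15:
  fixes V :: "'v set" and E :: "('v \<times> 'v) set"
  assumes "graph V E"
  shows "(chi_alg V E = 1 \<longleftrightarrow> E = {}) \<and>
         (V \<noteq> {} \<longrightarrow> (chi_alg V E = 1 \<longleftrightarrow> chromatic_number V E = 1))"
proof -
  have g: "finite V \<and> E \<subseteq> V \<times> V \<and> sym E \<and> (\<forall>v. (v, v) \<notin> E)"
    using assms unfolding graph_def by assumption
  have fin: "finite V" and EV: "E \<subseteq> V \<times> V" and loop: "\<forall>v. (v, v) \<notin> E"
    using g by simp_all
  obtain f :: "'v \<Rightarrow> nat" and n :: nat where fi: "f ` V = {i. i < n} \<and> inj_on f V"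
    using finite_imp_inj_to_nat_seg[OF fin] by iprover
  have fV: "f ` V = {i. i < n}" and inj: "inj_on f V" using fi by simp_all
  have fl: "\<forall>v\<in>V. f v < n"
  proof
    fix v assume "v \<in> V"
    then have "f v \<in> f ` V" by (rule imageI)
    then show "f v < n" unfolding fV by simp
  qed
  have proper: "\<forall>(v, w)\<in>E. f v \<noteq> f w"
  proof (intro ballI, clarify)
    fix v w assume e: "(v, w) \<in> E" and eq: "f v = f w"
    have "v \<in> V" "w \<in> V" using e EV by auto
    then have "v = w" using inj eq by (simp add: inj_on_def)
    then show False using e loop by simp
  qed
  let ?P = "\<lambda>c::nat. 1 \<le> c \<and> hom_algebra_nonzero V E (Kc_edges c) c"
  have fl2: "\<forall>v\<in>V. f v < n + 2" using fl by auto
  have Pn: "?P (n + 2)"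
    using nonzero_of_colouring[OF _ fl2 proper EV] by simp
  have A: "chi_alg V E = 1 \<longleftrightarrow> E = {}"
  proof
    assume c1: "chi_alg V E = 1"
    show "E = {}"
    proof (rule ccontr)
      assume "E \<noteq> {}"
      then obtain v w where vw: "(v, w) \<in> E" by auto
      have "\<not> ?P 1" using nonzero1[OF vw EV] by simp
      moreover have "?P (chi_alg V E)" unfolding chi_alg_def by (rule LeastI[of ?P, OF Pn])
      ultimately show False using c1 by simp
    qed
  next
    assume "E = {}"
    then have p1: "?P 1" using zero1[of E V] by simp
    show "chi_alg V E = 1" unfolding chi_alg_def
      by (rule Least_equality[of ?P 1, OF p1]) simp
  qed
  let ?Q = "\<lambda>c::nat. \<exists>g::'v \<Rightarrow> nat. (\<forall>v\<in>V. g v < c) \<and> (\<forall>(v, w)\<in>E. g v \<noteq> g w)"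
  have Qn: "?Q n" by (rule exI[of _ f]) (use fl proper in simp)
  have B: "V \<noteq> {} \<longrightarrow> (chromatic_number V E = 1 \<longleftrightarrow> E = {})"
  proof (intro impI iffI)
    assume Vne: "V \<noteq> {}" and c1: "chromatic_number V E = 1"
    show "E = {}"
    proof (rule ccontr)
      assume "E \<noteq> {}"
      then obtain v w where e: "(v, w) \<in> E" by auto
      have "\<not> ?Q 1"
      proof
        assume "?Q 1"
        then obtain g :: "'v \<Rightarrow> nat" where G: "(\<forall>v\<in>V. g v < 1) \<and> (\<forall>(v, w)\<in>E. g v \<noteq> g w)" ..
        have g1: "\<forall>v\<in>V. g v < 1" and g2: "\<forall>(v, w)\<in>E. g v \<noteq> g w" using G by simp_all
        have "v \<in> V" "w \<in> V" using e EV by auto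
        then have "g v = 0" "g w = 0" using g1 by auto
        moreover have "g v \<noteq> g w" using g2 e by auto
        ultimately show False by simp
      qed
      moreover have Qc: "?Q (chromatic_number V E)"
        unfolding chromatic_number_def by (rule LeastI[of ?Q, OF Qn])
      then have "?Q 1" unfolding c1 .
      ultimately show False by contradiction
    qed
  next
    assume Vne: "V \<noteq> {}" and E0: "E = {}"
    have q1: "?Q 1" using E0 by (intro exI[of _ "\<lambda>_. 0"]) simp
    have q0: "1 \<le> y" if qy: "?Q y" for y
    proof -
      obtain v :: 'v where v: "v \<in> V" using Vne by blast
      obtain g :: "'v \<Rightarrow> nat" where G: "(\<forall>v\<in>V. g v < y) \<and> (\<forall>(v, w)\<in>E. g v \<noteq> g w)" using qy ..
      then have "\<forall>v\<in>V. g v < y" by simp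
      then have "g v < y" using v by blast
      then show ?thesis by simp
    qed
    show "chromatic_number V E = 1" unfolding chromatic_number_def
      by (rule Least_equality[of ?Q 1, OF q1 q0])
  qed
  show ?thesis
  proof (intro conjI impI)
    show "chi_alg V E = 1 \<longleftrightarrow> E = {}" by (rule A)
  next
    assume vne: "V \<noteq> {}"
    from B vne have C: "chromatic_number V E = 1 \<longleftrightarrow> E = {}" by (rule mp)
    show "chi_alg V E = 1 \<longleftrightarrow> chromatic_number V E = 1" using A C by (simp only:)
  qed
qed

end
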